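(* Let $A=(a(x),dF(x))$ and $B=(b(x),dF(x))$ be games. Then $f(p)=\exp\big(\int\log(pa(x)+(1-p)b(x))\,dF(x)\big)/e^r$ is continuous on $[0,1]$.
   Context: A game is a pair $(a(x),dF(x))$ with $dF$ a probability measure on $\mathbb{R}$ and $a\ge0$ measurable with finite positive integral. A real $r$ is fixed; convention $\exp(-\infty)=0$. *)

theory Defs
  imports "HOL-Probability.Probability"
begin

definition log_ext :: "real \<Rightarrow> ereal" where
  "log_ext x = (if x > 0 then ereal (ln x) else -\<infinity>)"

definition ext_integral :: "'a measure \<Rightarrow> ('a \<Rightarrow> ereal) \<Rightarrow> ereal" where
  "ext_integral M g =
     enn2ereal (\<integral>\<^sup>+ x. e2ennreal (max 0 (g x)) \<partial>M)
   - enn2ereal (\<integral>\<^sup>+ x. e2ennreal (max 0 (- g x)) \<partial>M)"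

text \<open>Extended exponential with exp(-infinity) = 0 (the value at +infinity is
  irrelevant in the application and is set to 0).\<close>
definition exp_ext :: "ereal \<Rightarrow> real" where
  "exp_ext t = (case t of ereal x \<Rightarrow> exp x | _ \<Rightarrow> 0)"

definition game :: "real measure \<Rightarrow> (real \<Rightarrow> real) \<Rightarrow> bool" where
  "game F a \<longleftrightarrow> prob_space F \<and> sets F = sets borel \<and> a \<in> borel_measurable F
     \<and> (\<forall>x. 0 \<le> a x) \<and> integrable F a \<and> 0 < integral\<^sup>L F a"

end

theory Submission
  imports Defs
begin

lemma game_facts:
  assumes "game F a"
  shows "prob_space F" "a \<in> borel_measurable F" "\<And>x. 0 \<le> a x" "integrable F a"
  using assms unfolding game_def by auto

lemma U_bound:
  fixes y :: real assumes "0 \<le> c" "y \<le> c"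
  shows "0 \<le> ln (max 1 y)" "ln (max 1 y) \<le> c"
proof -
  show "0 \<le> ln (max 1 y)" by simp
  have "ln (max 1 y) \<le> max 1 y - 1" by (rule ln_le_minus_one) simp
  then show "ln (max 1 y) \<le> c" using assms by linarith
qed

lemma e2m: "e2ennreal (max 0 (ereal z)) = ennreal z"
  by (cases "0 \<le> z") (auto simp: max_def ennreal_neg zero_ereal_def)

lemma repr:
  fixes P :: real and N :: ennreal and y :: "real \<Rightarrow> real"
  assumes F: "prob_space F"
  and intU: "integrable F (\<lambda>x. ln (max 1 (y x)))"
  shows "exp_ext (ext_integral F (\<lambda>x. log_ext (y x))) =
     exp (\<integral>x. ln (max 1 (y x)) \<partial>F) *
     (let N = \<integral>\<^sup>+x. (if 0 < y x then ennreal (max 0 (- ln (y x))) else top) \<partial>F in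
        if N = top then 0 else exp (- enn2real N))"
proof -
  have e1: "(\<lambda>x. e2ennreal (max 0 (log_ext (y x)))) = (\<lambda>x. ennreal (ln (max 1 (y x))))"
  proof
    fix x show "e2ennreal (max 0 (log_ext (y x))) = ennreal (ln (max 1 (y x)))"
    proof (cases "0 < y x")
      case True
      have "max 0 (ereal (ln (y x))) = ereal (max 0 (ln (y x)))" by (simp add: max_def)
      moreover have "max 0 (ln (y x)) = ln (max 1 (y x))"
        using True by (auto simp: max_def)
      ultimately show ?thesis using True by (simp add: log_ext_def)
    next
      case False
      then show ?thesis by (simp add: log_ext_def max_def zero_ereal_def[symmetric])
    qed
  qed
  have e2: "(\<lambda>x. e2ennreal (max 0 (- log_ext (y x)))) =
      (\<lambda>x. (if 0 < y x then ennreal (max 0 (- ln (y x))) else top))"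
  proof
    fix x show "e2ennreal (max 0 (- log_ext (y x))) = (if 0 < y x then ennreal (max 0 (- ln (y x))) else top)"
    proof (cases "0 < y x")
      case True
      show ?thesis using True by (simp add: log_ext_def e2m)
    next
      case False
      then show ?thesis by (simp add: log_ext_def)
    qed
  qed
  have pos: "(\<integral>\<^sup>+x. ennreal (ln (max 1 (y x))) \<partial>F) = ennreal (\<integral>x. ln (max 1 (y x)) \<partial>F)"
    by (rule nn_integral_eq_integral[OF intU]) simp
  have I0: "0 \<le> (\<integral>x. ln (max 1 (y x)) \<partial>F)" by (rule integral_nonneg_AE) simp
  define N where "N = (\<integral>\<^sup>+x. (if 0 < y x then ennreal (max 0 (- ln (y x))) else top) \<partial>F)"
  have ext: "ext_integral F (\<lambda>x. log_ext (y x)) = ereal (\<integral>x. ln (max 1 (y x)) \<partial>F) - enn2ereal N"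
    unfolding ext_integral_def e1 e2 pos N_def using I0 by simp
  show ?thesis
  proof (cases "N = top")
    case True
    then show ?thesis unfolding N_def[symmetric] Let_def ext by (simp add: exp_ext_def)
  next
    case False
    then obtain n where n: "N = ennreal n" "0 \<le> n" by (cases N) auto
    then show ?thesis unfolding N_def[symmetric] Let_def ext
      by (simp add: exp_ext_def exp_diff exp_minus field_simps)
  qed
qed

lemma psi_tendsto:
  fixes z :: "nat \<Rightarrow> real"
  assumes z: "z \<longlonglongrightarrow> z0" and z0: "0 \<le> z0"
  shows "(\<lambda>n. if 0 < z n then ennreal (max 0 (- ln (z n))) else top) \<longlonglongrightarrow>
         (if 0 < z0 then ennreal (max 0 (- ln z0)) else top)"
proof (cases "0 < z0")
  case True
  have ev: "eventually (\<lambda>n. 0 < z n) sequentially"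
    using order_tendstoD(1)[OF z True] .
  have "(\<lambda>n. ennreal (max 0 (- ln (z n)))) \<longlonglongrightarrow> ennreal (max 0 (- ln z0))"
    using True by (intro tendsto_intros z) auto
  then have "(\<lambda>n. if 0 < z n then ennreal (max 0 (- ln (z n))) else top) \<longlonglongrightarrow> ennreal (max 0 (- ln z0))"
    by (rule Lim_transform_eventually) (use ev in \<open>auto elim: eventually_mono\<close>)
  then show ?thesis using True by simp
next
  case False
  then have z00: "z0 = 0" using z0 by simp
  show ?thesis unfolding z00
  proof (simp, rule order_tendstoI)
    fix w :: ennreal assume "w < top"
    then obtain t where t: "w = ennreal t" "0 \<le> t" by (cases w) auto
    have "eventually (\<lambda>n. z n < exp (- t)) sequentially"
      using order_tendstoD(2)[OF z] z00 by simp
    then show "eventually (\<lambda>n. w < (if 0 < z n then ennreal (max 0 (- ln (z n))) else top)) sequentially"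
    proof (rule eventually_mono)
      fix n assume zn: "z n < exp (- t)"
      show "w < (if 0 < z n then ennreal (max 0 (- ln (z n))) else top)"
      proof (cases "0 < z n")
        case True
        have "ln (z n) < ln (exp (- t))" using True zn by (subst ln_less_cancel_iff) auto
        then have "t < max 0 (- ln (z n))" by simp
        then show ?thesis using True t by (simp add: ennreal_less_iff)
      next
        case False then show ?thesis using \<open>w < top\<close> by simp
      qed
    qed
  next
    fix w :: ennreal assume "top < w" then show "eventually (\<lambda>n. (if 0 < z n then ennreal (max 0 (- ln (z n))) else top) < w) sequentially"
      by simp
  qed
qed

lemma tendsto_if_const: "(\<not> P \<Longrightarrow> (f \<longlongrightarrow> x) F) \<Longrightarrow> ((\<lambda>n. if P then c else f n) \<longlongrightarrow> (if P then c else x)) F"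
  by auto

theorem lemmaD11:
  fixes F :: "real measure" and a b :: "real \<Rightarrow> real" and r :: real
  assumes "game F a" and "game F b"
  shows "continuous_on {0..1}
    (\<lambda>p::real. exp_ext (ext_integral F (\<lambda>x. log_ext (p * a x + (1 - p) * b x))) / exp r)"
proof -
  note A = game_facts[OF assms(1)] and B = game_facts[OF assms(2)]
  interpret prob_space F by (rule A(1))
  define Y where "Y q x = q * a x + (1 - q) * b x" for q x
  define U where "U q x = ln (max 1 (Y q x))" for q x
  define V where "V q x = (if 0 < Y q x then ennreal (max 0 (- ln (Y q x))) else top)" for q x
  define N where "N q = (\<integral>\<^sup>+x. V q x \<partial>F)" for q
  define G where "G q = (if N q = top then 0 else exp (- enn2real (N q)))" for q
  have Ym: "Y q \<in> borel_measurable F" for q unfolding Y_def using A(2) B(2) by measurable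
  have Um: "U q \<in> borel_measurable F" for q unfolding U_def using Ym by measurable
  have Vm: "V q \<in> borel_measurable F" for q unfolding V_def using Ym by measurable
  have Y0: "0 \<le> Y q x" if "q \<in> {0..1}" for q x
    unfolding Y_def using that A(3) B(3) by (auto intro!: add_nonneg_nonneg mult_nonneg_nonneg)
  have Yb: "Y q x \<le> a x + b x" if "q \<in> {0..1}" for q x
  proof -
    have "q * a x \<le> 1 * a x" using that A(3)[of x] by (intro mult_right_mono) auto
    moreover have "(1 - q) * b x \<le> 1 * b x" using that B(3)[of x] by (intro mult_right_mono) auto
    ultimately show ?thesis unfolding Y_def by simp
  qed
  have Ub: "0 \<le> U q x \<and> U q x \<le> a x + b x" if "q \<in> {0..1}" for q x
    using U_bound[OF add_nonneg_nonneg[OF A(3) B(3)] Yb[OF that]] unfolding U_def by auto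
  have intU: "integrable F (U q)" if "q \<in> {0..1}" for q
  proof (rule Bochner_Integration.integrable_bound[OF Bochner_Integration.integrable_add[OF A(4) B(4)] Um])
    show "AE x in F. norm (U q x) \<le> norm (a x + b x)"
      using Ub[OF that] by (auto intro!: AE_I2 order_trans[OF _ abs_ge_self])
  qed
  have feq: "exp_ext (ext_integral F (\<lambda>x. log_ext (q * a x + (1 - q) * b x))) / exp r
      = exp (\<integral>x. U q x \<partial>F) * G q / exp r" if "q \<in> {0..1}" for q
    using repr[OF A(1), of "Y q"] intU[OF that]
    unfolding Y_def U_def G_def N_def V_def Let_def by simp
  show ?thesis
  proof (rule continuous_on_sequentiallyI)
    fix s :: "nat \<Rightarrow> real" and p
    assume s: "\<forall>n. s n \<in> {0..1}" and p: "p \<in> {0..1}" and lim: "s \<longlonglongrightarrow> p"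
    have P: "(\<lambda>n. \<integral>x. U (s n) x \<partial>F) \<longlonglongrightarrow> (\<integral>x. U p x \<partial>F)"
    proof (rule integral_dominated_convergence[OF Um Um Bochner_Integration.integrable_add[OF A(4) B(4)]])
      show "AE x in F. (\<lambda>n. U (s n) x) \<longlonglongrightarrow> U p x"
        unfolding U_def Y_def by (intro AE_I2 tendsto_intros lim) (auto simp: max_def)
      show "AE x in F. norm (U (s n) x) \<le> a x + b x" for n
        using Ub[OF s[rule_format, of n]] by (auto intro!: AE_I2)
    qed
    have G01: "0 \<le> G q \<and> G q \<le> 1" for q
      unfolding G_def by (auto simp: enn2real_nonneg)
    define c where "c q = min 1 (min (if p = 0 then 1 else q / p) (if p = 1 then 1 else (1 - q) / (1 - p)))" for q
    have c1: "(\<lambda>n. c (s n)) \<longlonglongrightarrow> 1"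
    proof -
      have "(\<lambda>n. min 1 (min (if p = 0 then 1 else s n / p) (if p = 1 then 1 else (1 - s n) / (1 - p))))
          \<longlonglongrightarrow> min 1 (min (if p = 0 then 1 else p / p) (if p = 1 then 1 else (1 - p) / (1 - p)))"
        by (intro tendsto_min tendsto_const tendsto_if_const tendsto_intros lim) auto
      moreover have "min 1 (min (if p = 0 then 1 else p / p) (if p = 1 then 1 else (1 - p) / (1 - p))) = (1::real)"
        by auto
      ultimately show ?thesis unfolding c_def by simp
    qed
    have cY: "c q * Y p x \<le> Y q x" if q: "q \<in> {0..1}" for q x
    proof -
      have h1: "c q * p \<le> q"
      proof (cases "p = 0")
        case True then show ?thesis using q by simp
      next
        case False
        then have "c q \<le> q / p" unfolding c_def by auto
        then show ?thesis using False p by (simp add: pos_le_divide_eq)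
      qed
      have h2: "c q * (1 - p) \<le> 1 - q"
      proof (cases "p = 1")
        case True then show ?thesis using q by simp
      next
        case False
        then have "c q \<le> (1 - q) / (1 - p)" unfolding c_def by auto
        then show ?thesis using False p by (simp add: pos_le_divide_eq)
      qed
      have "c q * Y p x = (c q * p) * a x + (c q * (1 - p)) * b x" unfolding Y_def by algebra
      also have "\<dots> \<le> q * a x + (1 - q) * b x"
        using h1 h2 A(3)[of x] B(3)[of x] by (intro add_mono mult_right_mono) auto
      finally show ?thesis unfolding Y_def .
    qed
    have c_le1: "c q \<le> 1" for q unfolding c_def by simp
    have Vb: "V q x \<le> ennreal (- ln (c q)) + V p x" if q: "q \<in> {0..1}" and cq: "0 < c q" for q x
    proof (cases "0 < Y p x")
      case False then show ?thesis unfolding V_def by simp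
    next
      case True
      have "0 < c q * Y p x" using True cq by simp
      also have "\<dots> \<le> Y q x" by (rule cY[OF q])
      finally have Yq: "0 < Y q x" .
      have "ln (c q * Y p x) \<le> ln (Y q x)" using cY[OF q, of x] \<open>0 < c q * Y p x\<close> Yq by (subst ln_le_cancel_iff) auto
      then have "ln (c q) + ln (Y p x) \<le> ln (Y q x)" using cq True by (simp add: ln_mult)
      moreover have "ln (c q) \<le> 0" using c_le1[of q] cq by simp
      ultimately have "max 0 (- ln (Y q x)) \<le> - ln (c q) + max 0 (- ln (Y p x))" by linarith
      then have "ennreal (max 0 (- ln (Y q x))) \<le> ennreal (- ln (c q) + max 0 (- ln (Y p x)))"
        by (rule ennreal_leI)
      also have "\<dots> = ennreal (- ln (c q)) + ennreal (max 0 (- ln (Y p x)))"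
        using \<open>ln (c q) \<le> 0\<close> by (intro ennreal_plus) auto
      finally show ?thesis unfolding V_def using True Yq by simp
    qed
    have Nb: "N q \<le> ennreal (- ln (c q)) + N p" if q: "q \<in> {0..1}" and cq: "0 < c q" for q
    proof -
      have "N q \<le> (\<integral>\<^sup>+x. ennreal (- ln (c q)) + V p x \<partial>F)"
        unfolding N_def by (intro nn_integral_mono Vb[OF q cq])
      also have "\<dots> = (\<integral>\<^sup>+x. ennreal (- ln (c q)) \<partial>F) + N p"
        unfolding N_def by (rule nn_integral_add) (auto intro: Vm)
      also have "(\<integral>\<^sup>+x. ennreal (- ln (c q)) \<partial>F) = ennreal (- ln (c q))"
        by (simp add: emeasure_space_1)
      finally show ?thesis .
    qed
    have Gb: "c q * G p \<le> G q" if q: "q \<in> {0..1}" and cq: "0 < c q" for q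
    proof (cases "N p = top")
      case True then show ?thesis using G01[of q] unfolding G_def by simp
    next
      case False
      then obtain n where n: "N p = ennreal n" "0 \<le> n" by (cases "N p") auto
      have k0: "0 \<le> - ln (c q)" using c_le1[of q] cq by simp
      have "N q \<le> ennreal (- ln (c q) + n)" using Nb[OF q cq] n k0 by (simp add: ennreal_plus[symmetric])
      then obtain m where m: "N q = ennreal m" "0 \<le> m" "m \<le> - ln (c q) + n"
        using k0 n(2) by (cases "N q") (auto simp: ennreal_le_iff top_unique)
      have "c q * G p = exp (- (- ln (c q) + n))" unfolding G_def using n cq
        by (simp add: exp_diff exp_minus field_simps)
      also have "\<dots> \<le> exp (- m)" using m by simp
      also have "\<dots> = G q" unfolding G_def using m by simp
      finally show ?thesis .
    qed
    have Vlim: "(\<lambda>n. V (s n) x) \<longlonglongrightarrow> V p x" for x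
      unfolding V_def
      by (rule psi_tendsto) (use Y0[OF p] in \<open>auto simp: Y_def intro!: tendsto_intros lim\<close>)
    have Nliminf: "N p \<le> liminf (\<lambda>n. N (s n))"
    proof -
      have "N p = (\<integral>\<^sup>+x. liminf (\<lambda>n. V (s n) x) \<partial>F)"
        unfolding N_def by (intro nn_integral_cong) (simp add: lim_imp_Liminf[OF _ Vlim])
      also have "\<dots> \<le> liminf (\<lambda>n. N (s n))"
        unfolding N_def by (rule nn_integral_liminf) (rule Vm)
      finally show ?thesis .
    qed
    have Gl: "(\<lambda>n. G (s n)) \<longlonglongrightarrow> G p"
    proof (rule order_tendstoI)
      fix y assume y: "y < G p"
      have "(\<lambda>n. c (s n) * G p) \<longlonglongrightarrow> 1 * G p" by (intro tendsto_intros c1)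
      then have e1: "eventually (\<lambda>n. y < c (s n) * G p) sequentially"
        using y by (intro order_tendstoD(1)) auto
      have e2: "eventually (\<lambda>n. 0 < c (s n)) sequentially"
        using c1 by (intro order_tendstoD(1)) auto
      show "eventually (\<lambda>n. y < G (s n)) sequentially"
        using e1 e2 by eventually_elim (use Gb s in \<open>fastforce\<close>)
    next
      fix y assume y: "G p < y"
      show "eventually (\<lambda>n. G (s n) < y) sequentially"
      proof (cases "1 < y")
        case True then show ?thesis using G01 by (intro always_eventually) (auto intro: le_less_trans)
      next
        case False
        have y0: "0 < y" using y G01[of p] by linarith
        have ly: "0 \<le> - ln y" using False y0 by simp
        have "ennreal (- ln y) < N p"
        proof (cases "N p = top")
          case True then show ?thesis by simp
        next
          case Nf: False
          then obtain n where n: "N p = ennreal n" "0 \<le> n" by (cases "N p") auto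
          have "exp (- n) < exp (ln y)" using y unfolding G_def using n y0 by simp
          then have "- ln y < n" by simp
          then show ?thesis using n ly by (simp add: ennreal_less_iff)
        qed
        also note Nliminf
        finally have "eventually (\<lambda>n. ennreal (- ln y) < N (s n)) sequentially"
          by (rule less_LiminfD)
        then show ?thesis
        proof (rule eventually_mono)
          fix n assume h: "ennreal (- ln y) < N (s n)"
          show "G (s n) < y"
          proof (cases "N (s n) = top")
            case True then show ?thesis using y0 unfolding G_def by simp
          next
            case False
            then obtain m where m: "N (s n) = ennreal m" "0 \<le> m" by (cases "N (s n)") auto
            then have "- ln y < m" using h ly by (simp add: ennreal_less_iff)
            then have "exp (- m) < exp (ln y)" by simp
            then show ?thesis unfolding G_def using m y0 by simp
          qed
        qed
      qed
    qed
    have "(\<lambda>n. exp (\<integral>x. U (s n) x \<partial>F) * G (s n) / exp r) \<longlonglongrightarrow> exp (\<integral>x. U p x \<partial>F) * G p / exp r"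
      by (intro tendsto_intros P Gl) simp
    then show "(\<lambda>n. exp_ext (ext_integral F (\<lambda>x. log_ext (s n * a x + (1 - s n) * b x))) / exp r)
        \<longlonglongrightarrow> exp_ext (ext_integral F (\<lambda>x. log_ext (p * a x + (1 - p) * b x))) / exp r"
      using feq[OF p] feq[OF s[rule_format]] by simp
  qed
qed

end
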